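(* Let $A\in\mathcal S_n^+$ have rank $2$. Then $\operatorname{st}_+(A)=2$.
   Context: $\mathcal S_n^+$ is the set of $n\times n$ symmetric entrywise nonnegative real matrices. The SNT-rank $\operatorname{st}_+(A)$ of $A\in\mathcal S_n^+$ is the minimal $k$ such that $A=BCB^T$ with $B$ an entrywise nonnegative $n\times k$ matrix and $C$ a symmetric entrywise nonnegative $k\times k$ matrix. *)

theory Defs
  imports "Jordan_Normal_Form.DL_Rank"
begin

definition nonneg_mat :: "real mat \<Rightarrow> bool" where
  "nonneg_mat M \<longleftrightarrow> (\<forall>i<dim_row M. \<forall>j<dim_col M. M $$ (i, j) \<ge> 0)"

definition sym_nonneg_mat :: "nat \<Rightarrow> real mat \<Rightarrow> bool" where
  "sym_nonneg_mat n A \<longleftrightarrow> A \<in> carrier_mat n n \<and> A\<^sup>T = A \<and> nonneg_mat A"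

definition snt_rank :: "nat \<Rightarrow> real mat \<Rightarrow> nat" where
  "snt_rank n A = (LEAST k. \<exists>B C. B \<in> carrier_mat n k \<and> nonneg_mat B \<and>
      sym_nonneg_mat k C \<and> A = B * C * B\<^sup>T)"

end

theory Submission
  imports Defs
begin

lemma U3:
  fixes u v :: "nat \<Rightarrow> real" and n :: nat
  assumes un: "\<And>r. r < n \<Longrightarrow> u r \<ge> 0" and vn: "\<And>r. r < n \<Longrightarrow> v r \<ge> 0"
    and np1: "\<not> (\<exists>t. \<forall>r<n. u r = t * v r)" and np2: "\<not> (\<exists>t. \<forall>r<n. v r = t * u r)"
  shows "\<exists>w1 w2 i j. i < n \<and> j < n \<and> (\<forall>r<n. w1 r \<ge> 0 \<and> w2 r \<ge> 0) \<and>
     w1 i = 0 \<and> w2 i > 0 \<and> w2 j = 0 \<and> w1 j > 0 \<and>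
     (\<forall>x y. \<exists>\<alpha> \<beta>. \<forall>r<n. x * u r + y * v r = \<alpha> * w1 r + \<beta> * w2 r)"
proof -
  have "\<exists>r<n. v r \<noteq> 0" using np2[unfolded not_ex] by (metis mult_zero_left)
  then obtain r0 where r0: "r0 < n" "v r0 > 0" using vn by (metis less_le)
  have "\<exists>r<n. u r \<noteq> 0" using np1[unfolded not_ex] by (metis mult_zero_left)
  then obtain r1 where r1: "r1 < n" "u r1 > 0" using un by (metis less_le)
  define S where "S = (\<lambda>r. u r / v r) ` {r. r < n \<and> v r > 0}"
  have Sf: "finite S" "S \<noteq> {}" unfolding S_def using r0 by auto
  define t where "t = Min S"
  obtain i where i: "i < n" "v i > 0" "t = u i / v i"
    using Min_in[OF Sf] unfolding t_def S_def by auto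
  have tmin: "\<And>r. r < n \<Longrightarrow> v r > 0 \<Longrightarrow> t \<le> u r / v r"
    unfolding t_def S_def by (rule Min_le) auto
  define S' where "S' = (\<lambda>r. v r / u r) ` {r. r < n \<and> u r > 0}"
  have Sf': "finite S'" "S' \<noteq> {}" unfolding S'_def using r1 by auto
  define s where "s = Min S'"
  obtain j where j: "j < n" "u j > 0" "s = v j / u j"
    using Min_in[OF Sf'] unfolding s_def S'_def by auto
  have smin: "\<And>r. r < n \<Longrightarrow> u r > 0 \<Longrightarrow> s \<le> v r / u r"
    unfolding s_def S'_def by (rule Min_le) auto
  have t0: "t \<ge> 0" using i un by auto
  have s0: "s \<ge> 0" using j vn by auto
  define w1 where "w1 r = u r - t * v r" for r
  define w2 where "w2 r = v r - s * u r" for r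
  have w1n: "w1 r \<ge> 0" if "r < n" for r
  proof (cases "v r > 0")
    case True thus ?thesis using tmin[OF that True] by (simp add: w1_def pos_le_divide_eq)
  next
    case False thus ?thesis using vn[OF that] un[OF that] by (simp add: w1_def)
  qed
  have w2n: "w2 r \<ge> 0" if "r < n" for r
  proof (cases "u r > 0")
    case True thus ?thesis using smin[OF that True] by (simp add: w2_def pos_le_divide_eq)
  next
    case False thus ?thesis using vn[OF that] un[OF that] by (simp add: w2_def)
  qed
  define d where "d = 1 - s * t"
  have w1i: "w1 i = 0" using i by (simp add: w1_def)
  have w2j: "w2 j = 0" using j by (simp add: w2_def)
  have w1j: "w1 j = d * u j" using j by (simp add: w1_def d_def algebra_simps)
  have w2i: "w2 i = d * v i" using i by (simp add: w2_def d_def algebra_simps)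
  have d0: "d \<ge> 0" using w1n[OF j(1)] w1j j(2) by (simp add: zero_le_mult_iff)
  have dpos: "d > 0"
  proof (rule ccontr)
    assume "\<not> d > 0"
    hence d: "d = 0" using d0 by simp
    hence st: "s * t = 1" by (simp add: d_def)
    hence tp: "t > 0" using t0 s0 by (metis less_eq_real_def mult_zero_right zero_neq_one)
    have "\<forall>r<n. u r = t * v r"
    proof (intro allI impI)
      fix r assume r: "r < n"
      have "w1 r + t * w2 r = d * u r" by (simp add: w1_def w2_def d_def algebra_simps)
      hence "w1 r + t * w2 r = 0" using d by simp
      hence "w1 r = 0" using w1n[OF r] w2n[OF r] tp
        by (smt (verit) mult_nonneg_nonneg)
      thus "u r = t * v r" by (simp add: w1_def)
    qed
    thus False using np1 by blast
  qed
  have rep: "\<forall>x y. \<exists>\<alpha> \<beta>. \<forall>r<n. x * u r + y * v r = \<alpha> * w1 r + \<beta> * w2 r"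
  proof (intro allI)
    fix x y
    show "\<exists>\<alpha> \<beta>. \<forall>r<n. x * u r + y * v r = \<alpha> * w1 r + \<beta> * w2 r"
    proof (intro exI allI impI)
      fix r
      show "x * u r + y * v r = ((x + y * s) / d) * w1 r + ((x * t + y) / d) * w2 r"
      proof -
        have e: "(x + y * s) * w1 r + (x * t + y) * w2 r = d * (x * u r + y * v r)"
          unfolding w1_def w2_def d_def by (simp add: algebra_simps)
        have "((x + y * s) / d) * w1 r + ((x * t + y) / d) * w2 r
            = ((x + y * s) * w1 r + (x * t + y) * w2 r) / d" by (simp add: add_divide_distrib algebra_simps)
        also have "\<dots> = x * u r + y * v r" using e dpos by simp
        finally show ?thesis by simp
      qed
    qed
  qed
  show ?thesis
    apply (rule exI[of _ w1], rule exI[of _ w2], rule exI[of _ i], rule exI[of _ j])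
    using i j w1n w2n w1i w2j w1j w2i dpos rep by auto
qed
lemma entry_BCBt:
  fixes B C :: "real mat"
  assumes B: "B \<in> carrier_mat n k" and C: "C \<in> carrier_mat k k" and r: "r < n" and c: "c < n"
  shows "(B * C * B\<^sup>T) $$ (r, c) = (\<Sum>a<k. B $$ (r, a) * (\<Sum>b<k. C $$ (a, b) * B $$ (c, b)))"
  using B C r c by (simp add: scalar_prod_def atLeast0LessThan)

lemma lower:
  fixes B C :: "real mat"
  assumes B: "B \<in> carrier_mat n k" and C: "C \<in> carrier_mat k k" and k: "k \<le> 1"
  shows "vec_space.rank n (B * C * B\<^sup>T) \<le> 1"
proof (rule vec_space.rank_le_1_product_entries[where f = "\<lambda>r. if k = 1 then B $$ (r,0) else 0"
      and g = "\<lambda>c. if k = 1 then C $$ (0,0) * B $$ (c,0) else 0"])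
  show "B * C * B\<^sup>T \<in> carrier_mat n n" using B C by auto
  fix r c assume "r < dim_row (B * C * B\<^sup>T)" "c < dim_col (B * C * B\<^sup>T)"
  hence rc: "r < n" "c < n" using B by auto
  show "(B * C * B\<^sup>T) $$ (r, c) = (if k = 1 then B $$ (r,0) else 0) * (if k = 1 then C $$ (0,0) * B $$ (c,0) else 0)"
    unfolding entry_BCBt[OF B C rc]
    using k by (cases k) auto
qed
lemma indep3:
  fixes P Q R :: "real vec"
  assumes P: "P \<in> carrier_vec n" and Q: "Q \<in> carrier_vec n" and R: "R \<in> carrier_vec n"
   and np: "\<not> (\<exists>t. \<forall>r<n. P $ r = t * Q $ r)"
   and nq: "\<not> (\<exists>t. \<forall>r<n. Q $ r = t * P $ r)"
   and nr: "\<not> (\<exists>x y. \<forall>r<n. R $ r = x * P $ r + y * Q $ r)"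
   and M: "M \<in> carrier_mat n nc" and PQRM: "{P, Q, R} \<subseteq> set (cols M)"
  shows "vec_space.rank n M \<ge> 3"
proof -
  interpret vec_space "TYPE(real)" n .
  have PQ: "P \<noteq> Q"
  proof
    assume "P = Q" hence "\<forall>r<n. P $ r = 1 * Q $ r" by simp
    thus False using np by blast
  qed
  have PR: "R \<noteq> P"
  proof
    assume "R = P" hence "\<forall>r<n. R $ r = 1 * P $ r + 0 * Q $ r" by simp
    thus False using nr by blast
  qed
  have QR: "R \<noteq> Q"
  proof
    assume "R = Q" hence "\<forall>r<n. R $ r = 0 * P $ r + 1 * Q $ r" by simp
    thus False using nr by blast
  qed
  have li: "lin_indpt {P, Q, R}"
  proof (rule finite_lin_indpt2)
    show "finite {P, Q, R}" by simp
    show "{P, Q, R} \<subseteq> carrier_vec n" using P Q R by auto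
    fix a :: "real vec \<Rightarrow> real" assume "True" and lc: "lincomb a {P, Q, R} = 0\<^sub>v n"
    have eq: "a P * P $ r + a Q * Q $ r + a R * R $ r = 0" if r: "r < n" for r
    proof -
      have "lincomb a {P, Q, R} $ r = 0" using lc r by simp
      moreover have "lincomb a {P, Q, R} $ r = (\<Sum>x\<in>{P,Q,R}. a x * x $ r)"
        by (rule lincomb_index[OF r]) (use P Q R in auto)
      ultimately show ?thesis using PQ PR QR by (simp add: algebra_simps)
    qed
    have aR: "a R = 0"
    proof (rule ccontr)
      assume h: "a R \<noteq> 0"
      have "\<forall>r<n. R $ r = (- a P / a R) * P $ r + (- a Q / a R) * Q $ r"
      proof (intro allI impI)
        fix r assume "r < n"
        from eq[OF this] h show "R $ r = (- a P / a R) * P $ r + (- a Q / a R) * Q $ r"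
          by (simp add: field_simps)
      qed
      thus False using nr by blast
    qed
    have aQ: "a Q = 0"
    proof (rule ccontr)
      assume h: "a Q \<noteq> 0"
      have "\<forall>r<n. Q $ r = (- a P / a Q) * P $ r"
      proof (intro allI impI)
        fix r assume "r < n"
        from eq[OF this] h aR show "Q $ r = (- a P / a Q) * P $ r"
          by (simp add: field_simps)
      qed
      thus False using nq by blast
    qed
    have aP: "a P = 0"
    proof (rule ccontr)
      assume h: "a P \<noteq> 0"
      have "\<forall>r<n. P $ r = 0 * Q $ r" using eq aR aQ h by simp
      thus False using np by blast
    qed
    show "\<forall>v\<in>{P, Q, R}. a v = 0" using aP aQ aR by simp
  qed
  have "card {P, Q, R} \<le> rank M"
    by (rule rank_ge_card_indpt[OF M PQRM li])
  moreover have "card {P, Q, R} = 3" using PQ PR QR by auto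
  ultimately show ?thesis by simp
qed

lemma colA_in:
  fixes A :: "real mat"
  assumes A: "A \<in> carrier_mat n n" and p: "p < n"
  shows "col A p \<in> set (cols A)" "col A p \<in> carrier_vec n" "\<And>r. r < n \<Longrightarrow> col A p $ r = A $$ (r,p)"
  using A p by (auto simp: cols_def)

lemma U12:
  fixes A :: "real mat"
  assumes A: "A \<in> carrier_mat n n" and rk: "vec_space.rank n A = 2"
  shows "\<exists>p q. p<n \<and> q<n \<and> \<not>(\<exists>t. \<forall>r<n. A$$(r,p) = t*A$$(r,q)) \<and> \<not>(\<exists>t. \<forall>r<n. A$$(r,q) = t*A$$(r,p))
     \<and> (\<forall>c<n. \<exists>x y. \<forall>r<n. A$$(r,c) = x*A$$(r,p) + y*A$$(r,q))"
proof -
  have nz: "\<exists>p<n. \<exists>r0<n. A$$(r0,p) \<noteq> 0"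
  proof (rule ccontr)
    assume h: "\<not> ?thesis"
    have "vec_space.rank n A \<le> 1"
      by (rule vec_space.rank_le_1_product_entries[OF A, where f="\<lambda>r. 0" and g="\<lambda>c. 0"]) (use A h in auto)
    thus False using rk by simp
  qed
  then obtain p r0 where p: "p<n" "r0<n" "A$$(r0,p) \<noteq> 0" by blast
  have "\<exists>q<n. \<not>(\<exists>t. \<forall>r<n. A$$(r,q) = t*A$$(r,p))"
  proof (rule ccontr)
    assume h: "\<not> ?thesis"
    hence h': "\<And>q. q < n \<Longrightarrow> \<exists>t. \<forall>r<n. A$$(r,q) = t*A$$(r,p)" by blast
    define g where "g q = (SOME t. \<forall>r<n. A$$(r,q) = t*A$$(r,p))" for q
    have g: "\<And>q r. q < n \<Longrightarrow> r < n \<Longrightarrow> A$$(r,q) = g q * A$$(r,p)"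
      unfolding g_def using someI_ex[OF h'] by blast
    have "vec_space.rank n A \<le> 1"
      by (rule vec_space.rank_le_1_product_entries[OF A, where f="\<lambda>r. A$$(r,p)" and g="g"])
        (use A g in auto)
    thus False using rk by simp
  qed
  then obtain q where q: "q<n" and nq: "\<not>(\<exists>t. \<forall>r<n. A$$(r,q) = t*A$$(r,p))" by blast
  have np: "\<not>(\<exists>t. \<forall>r<n. A$$(r,p) = t*A$$(r,q))"
  proof
    assume "\<exists>t. \<forall>r<n. A$$(r,p) = t*A$$(r,q)"
    then obtain t where t: "\<forall>r<n. A$$(r,p) = t*A$$(r,q)" by blast
    have "t \<noteq> 0" using t p by force
    hence "\<forall>r<n. A$$(r,q) = (1/t)*A$$(r,p)" using t by simp
    thus False using nq by blast
  qed
  have sp: "\<forall>c<n. \<exists>x y. \<forall>r<n. A$$(r,c) = x*A$$(r,p) + y*A$$(r,q)"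
  proof (intro allI impI, rule ccontr)
    fix c assume c: "c<n" and h: "\<not>(\<exists>x y. \<forall>r<n. A$$(r,c) = x*A$$(r,p) + y*A$$(r,q))"
    have "vec_space.rank n A \<ge> 3"
    proof (rule indep3[OF colA_in(2)[OF A p(1)] colA_in(2)[OF A q] colA_in(2)[OF A c] _ _ _ A])
      show "{col A p, col A q, col A c} \<subseteq> set (cols A)" using colA_in(1)[OF A] p q c by auto
      show "\<not> (\<exists>t. \<forall>r<n. col A p $ r = t * col A q $ r)" using np colA_in(3)[OF A] p q by simp
      show "\<not> (\<exists>t. \<forall>r<n. col A q $ r = t * col A p $ r)" using nq colA_in(3)[OF A] p q by simp
      show "\<not> (\<exists>x y. \<forall>r<n. col A c $ r = x * col A p $ r + y * col A q $ r)"
        using h colA_in(3)[OF A] p q c by simp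
    qed
    thus False using rk by simp
  qed
  show ?thesis using p q np nq sp by blast
qed

theorem mainTheorem6:
  fixes A :: "real mat" and n :: nat
  assumes "sym_nonneg_mat n A"
    and "vec_space.rank n A = 2"
  shows "snt_rank n A = 2"
proof -
  have A: "A \<in> carrier_mat n n" and AT: "A\<^sup>T = A" and An: "nonneg_mat A"
    using assms(1) unfolding sym_nonneg_mat_def by auto
  have sym: "A $$ (r,c) = A $$ (c,r)" if "r < n" "c < n" for r c
  proof -
    have "A $$ (r,c) = A\<^sup>T $$ (r,c)" using AT by simp
    also have "\<dots> = A $$ (c,r)" using that A by simp
    finally show ?thesis .
  qed
  have nn: "A $$ (r,c) \<ge> 0" if "r < n" "c < n" for r c
    using An that A unfolding nonneg_mat_def by auto
  obtain p q where pq: "p<n" "q<n" and np: "\<not>(\<exists>t. \<forall>r<n. A$$(r,p) = t*A$$(r,q))"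
    and nq: "\<not>(\<exists>t. \<forall>r<n. A$$(r,q) = t*A$$(r,p))"
    and sp: "\<forall>c<n. \<exists>x y. \<forall>r<n. A$$(r,c) = x*A$$(r,p) + y*A$$(r,q)"
    using U12[OF A assms(2)] by blast
  obtain w1 w2 i j where ij: "i < n" "j < n" and wn: "\<forall>r<n. w1 r \<ge> 0 \<and> w2 r \<ge> 0"
    and w: "w1 i = 0" "w2 i > 0" "w2 j = 0" "w1 j > 0"
    and rep: "\<forall>x y. \<exists>\<alpha> \<beta>. \<forall>r<n. x * A$$(r,p) + y * A$$(r,q) = \<alpha> * w1 r + \<beta> * w2 r"
    using U3[of n "\<lambda>r. A$$(r,p)" "\<lambda>r. A$$(r,q)"] nn pq np nq by blast
  have F: "A $$ (r,c) = w1 r * A $$ (j,c) / w1 j + w2 r * A $$ (i,c) / w2 i" if r: "r < n" and c: "c < n" for r c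
  proof -
    obtain x y where xy: "\<forall>r<n. A$$(r,c) = x*A$$(r,p) + y*A$$(r,q)" using sp c by blast
    obtain \<alpha> \<beta> where ab: "\<forall>r<n. x * A$$(r,p) + y * A$$(r,q) = \<alpha> * w1 r + \<beta> * w2 r" using rep by blast
    have e: "\<And>r. r < n \<Longrightarrow> A$$(r,c) = \<alpha> * w1 r + \<beta> * w2 r" using xy ab by simp
    have "A$$(j,c) = \<alpha> * w1 j" using e[OF ij(2)] w by simp
    hence a: "\<alpha> = A$$(j,c) / w1 j" using w by (simp add: field_simps)
    have "A$$(i,c) = \<beta> * w2 i" using e[OF ij(1)] w by simp
    hence b: "\<beta> = A$$(i,c) / w2 i" using w by (simp add: field_simps)
    show ?thesis using e[OF r] a b by (simp add: mult.commute)
  qed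
  define c11 where "c11 = A $$ (j,j) / (w1 j * w1 j)"
  define c22 where "c22 = A $$ (i,i) / (w2 i * w2 i)"
  define c12 where "c12 = A $$ (i,j) / (w1 j * w2 i)"
  define B where "B = mat n 2 (\<lambda>(r,c). if c = 0 then w1 r else w2 r)"
  define C where "C = mat 2 2 (\<lambda>(a,b). if a = 0 \<and> b = 0 then c11 else if a = 1 \<and> b = 1 then c22 else c12)"
  have B: "B \<in> carrier_mat n 2" unfolding B_def by simp
  have C: "C \<in> carrier_mat 2 2" unfolding C_def by simp
  have Bn: "nonneg_mat B" unfolding nonneg_mat_def B_def using wn by auto
  have cn: "c11 \<ge> 0" "c22 \<ge> 0" "c12 \<ge> 0" unfolding c11_def c22_def c12_def using nn ij w by auto
  have Cs: "sym_nonneg_mat 2 C"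
    unfolding sym_nonneg_mat_def
  proof (intro conjI)
    show "C \<in> carrier_mat 2 2" by (rule C)
    show "C\<^sup>T = C"
      by (rule eq_matI) (auto simp: C_def less_2_cases_iff)
    show "nonneg_mat C" unfolding nonneg_mat_def C_def using cn by auto
  qed
  have key: "A $$ (r,k) = w1 r * w1 k * c11 + w1 r * w2 k * c12 + w2 r * w1 k * c12 + w2 r * w2 k * c22"
    if r: "r < n" and k: "k < n" for r k
  proof -
    have 1: "A $$ (j,k) = w1 k * A $$ (j,j) / w1 j + w2 k * A $$ (i,j) / w2 i"
      using sym[OF ij(2) k] F[OF k ij(2)] by simp
    have 2: "A $$ (i,k) = w1 k * A $$ (i,j) / w1 j + w2 k * A $$ (i,i) / w2 i"
      using sym[OF ij(1) k] F[OF k ij(1)] sym[OF ij(1) ij(2)] by simp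
    show ?thesis unfolding F[OF r k] 1 2 c11_def c22_def c12_def using w
      by (simp add: field_simps)
  qed
  have eqA: "A = B * C * B\<^sup>T"
  proof (rule eq_matI)
    show "dim_row A = dim_row (B * C * B\<^sup>T)" "dim_col A = dim_col (B * C * B\<^sup>T)" using A B C by auto
    fix r k assume "r < dim_row (B * C * B\<^sup>T)" "k < dim_col (B * C * B\<^sup>T)"
    hence rk: "r < n" "k < n" using B by auto
    show "A $$ (r, k) = (B * C * B\<^sup>T) $$ (r, k)"
      unfolding entry_BCBt[OF B C rk] key[OF rk]
      using rk by (simp add: numeral_2_eq_2 lessThan_Suc B_def C_def algebra_simps)
  qed
  show ?thesis
    unfolding snt_rank_def
  proof (rule Least_equality)
    show "\<exists>B' C'. B' \<in> carrier_mat n 2 \<and> nonneg_mat B' \<and> sym_nonneg_mat 2 C' \<and> A = B' * C' * B'\<^sup>T"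
      using B Bn Cs eqA by blast
    fix k assume "\<exists>B' C'. B' \<in> carrier_mat n k \<and> nonneg_mat B' \<and> sym_nonneg_mat k C' \<and> A = B' * C' * B'\<^sup>T"
    then obtain B' C' where B': "B' \<in> carrier_mat n k" and C': "sym_nonneg_mat k C'" and e: "A = B' * C' * B'\<^sup>T"
      by blast
    show "2 \<le> k"
    proof (rule ccontr)
      assume "\<not> 2 \<le> k"
      hence "k \<le> 1" by simp
      hence "vec_space.rank n (B' * C' * B'\<^sup>T) \<le> 1"
        by (intro lower[OF B']) (use C' in \<open>auto simp: sym_nonneg_mat_def\<close>)
      thus False using e assms(2) by simp
    qed
  qed
qed

end
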